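(* Let $F\colon\mathbb{R}^{n_1}\times\mathbb{R}^{n_2}\to\mathcal{K}_{bcs}(\mathbb{R}^d)$ be locally integrably bounded and assume also that $M_\mathcal{K}^2F$ is locally integrably bounded. Then $M_\mathcal{K}^sF(x)\subset M_\mathcal{K}^1M_\mathcal{K}^2F(x)$ for every $x\in\mathbb{R}^{n_1}\times\mathbb{R}^{n_2}$.
   Context: $\mathcal{K}_{bcs}(\mathbb{R}^d)$ is the collection of compact, convex, symmetric subsets of $\mathbb{R}^d$. For $A\subset\mathbb{R}^d$, $|A|:=\sup\{|a|:a\in A\}$. A set-valued $F\colon\mathbb{R}^n\to\mathcal{K}(\mathbb{R}^d)$ (closed sets) is measurable iff there are measurable $f_k\colon\mathbb{R}^n\to\mathbb{R}^d$ with $F(x)=\overline{\{f_k(x):k\in\mathbb{N}\}}$ for all $x$; it is locally integrably bounded if $|F(x)|\le k(x)$ for all $x$ with some $k\in L^1_{loc}$. $S^0(F)$ is the set of measurable $f\colon\mathbb{R}^n\to\mathbb{R}^d$ with $f(x)\in F(x)$ for all $x$. For a set $E$ of positive finite measure, $\langle F\rangle_E:=\{\fint_E f:f\in S^0(F)\}$ (Aumann average). $\mathcal{R}$ is the set of rectangles $Q_1\times Q_2$ with $Q_i\subset\mathbb{R}^{n_i}$ axis-parallel cubes. The strong convex set-valued maximal operator is $M_\mathcal{K}^sF(x):=\overline{\operatorname{conv}}\big(\{\langle f\rangle_R1_R(x):R\in\mathcal{R},f\in S^0(F)\}\big)$. The one-parameter operator on $\mathbb{R}^m$ is $M_\mathcal{K}G(x):=\overline{\operatorname{conv}}\big(\{\langle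 g\rangle_Q1_Q(x):Q\subset\mathbb{R}^m\text{ cube},g\in S^0(G)\}\big)$, and $M_\mathcal{K}^1F(x_1,x_2):=M_\mathcal{K}(F(\cdot,x_2))(x_1)$, $M_\mathcal{K}^2F(x_1,x_2):=M_\mathcal{K}(F(x_1,\cdot))(x_2)$. *)

theory Defs
  imports "HOL-Analysis.Analysis"
begin

definition kbcs :: "'a::euclidean_space set \<Rightarrow> bool" where
  "kbcs A \<longleftrightarrow> compact A \<and> convex A \<and> uminus ` A = A"

definition loc_integrable :: "('a::euclidean_space \<Rightarrow> real) \<Rightarrow> bool" where
  "loc_integrable k \<longleftrightarrow> (\<forall>K. compact K \<longrightarrow> set_integrable lebesgue K k)"

definition loc_int_bounded :: "('a::euclidean_space \<Rightarrow> 'c::euclidean_space set) \<Rightarrow> bool" where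
  "loc_int_bounded F \<longleftrightarrow>
     (\<exists>k. loc_integrable k \<and> (\<forall>x. \<forall>a\<in>F x. norm a \<le> k x))"

definition S0 :: "('a::euclidean_space \<Rightarrow> 'c::euclidean_space set) \<Rightarrow> ('a \<Rightarrow> 'c) set" where
  "S0 F = {f. f \<in> borel_measurable lebesgue \<and> (\<forall>x. f x \<in> F x)}"

definition avg :: "'a::euclidean_space set \<Rightarrow> ('a \<Rightarrow> 'c::euclidean_space) \<Rightarrow> 'c" where
  "avg E f = (1 / measure lebesgue E) *\<^sub>R (LINT y:E|lebesgue. f y)"

definition cubes :: "'a::euclidean_space set set" where
  "cubes = {cbox a (a + h *\<^sub>R One) | a h. h > 0}"

definition rects :: "('a::euclidean_space \<times> 'b::euclidean_space) set set" where
  "rects = {Q1 \<times> Q2 | Q1 Q2. Q1 \<in> cubes \<and> Q2 \<in> cubes}"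

definition maxK :: "'a::euclidean_space set set \<Rightarrow> ('a \<Rightarrow> 'c::euclidean_space set) \<Rightarrow> 'a \<Rightarrow> 'c set" where
  "maxK \<Q> F x = closure (convex hull
      {indicator Q x *\<^sub>R avg Q f | Q f. Q \<in> \<Q> \<and> f \<in> S0 F})"

definition MK :: "('a::euclidean_space \<Rightarrow> 'c::euclidean_space set) \<Rightarrow> 'a \<Rightarrow> 'c set" where
  "MK G = maxK cubes G"

definition MKs :: "('a::euclidean_space \<times> 'b::euclidean_space \<Rightarrow> 'c::euclidean_space set)
                    \<Rightarrow> 'a \<times> 'b \<Rightarrow> 'c set" where
  "MKs F = maxK rects F"

definition MK1 :: "('a::euclidean_space \<times> 'b::euclidean_space \<Rightarrow> 'c::euclidean_space set)
                    \<Rightarrow> 'a \<times> 'b \<Rightarrow> 'c set" where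
  "MK1 F = (\<lambda>(x1, x2). MK (\<lambda>y1. F (y1, x2)) x1)"

definition MK2 :: "('a::euclidean_space \<times> 'b::euclidean_space \<Rightarrow> 'c::euclidean_space set)
                    \<Rightarrow> 'a \<times> 'b \<Rightarrow> 'c set" where
  "MK2 F = (\<lambda>(x1, x2). MK (\<lambda>y2. F (x1, y2)) x2)"

end

theory Submission
  imports Defs
begin

lemma ex_borel_version:
  fixes f :: "'a::euclidean_space \<Rightarrow> 'c::euclidean_space"
  assumes "f \<in> borel_measurable lebesgue"
  shows "\<exists>f'\<in>borel_measurable lborel. AE x in lborel. f x = f' x"
proof -
  have "\<forall>b\<in>Basis. \<exists>g\<in>borel_measurable lborel. AE x in lborel. f x \<bullet> b = g x"
  proof
    fix b :: 'c assume "b \<in> Basis"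
    have "(\<lambda>x. f x \<bullet> b) \<in> borel_measurable lebesgue" using assms by measurable
    then show "\<exists>g\<in>borel_measurable lborel. AE x in lborel. f x \<bullet> b = g x"
      by (rule completion_ex_borel_measurable_real)
  qed
  then obtain g where g: "\<And>b. b \<in> Basis \<Longrightarrow> g b \<in> borel_measurable lborel"
     "\<And>b. b \<in> Basis \<Longrightarrow> AE x in lborel. f x \<bullet> b = g b x"
    by metis
  define f' where "f' x = (\<Sum>b\<in>Basis. g b x *\<^sub>R b)" for x
  have "f' \<in> borel_measurable lborel"
    unfolding f'_def using g(1) by (intro borel_measurable_sum borel_measurable_scaleR) auto
  moreover have "AE x in lborel. \<forall>b\<in>Basis. f x \<bullet> b = g b x"
    using g(2) by (subst AE_finite_all) auto
  then have "AE x in lborel. f x = f' x"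
  proof (rule AE_mp, intro AE_I2 impI)
    fix x assume "\<forall>b\<in>Basis. f x \<bullet> b = g b x"
    then show "f x = f' x" unfolding f'_def
      by (metis (no_types, lifting) euclidean_representation sum.cong)
  qed
  ultimately show ?thesis by blast
qed

lemma measure_times_lborel:
  fixes A :: "'a::euclidean_space set" and B :: "'b::euclidean_space set"
  assumes A: "A \<in> sets lborel" and B: "B \<in> sets lborel"
    and fA: "emeasure lborel A < \<infinity>" and fB: "emeasure lborel B < \<infinity>"
  shows "measure lebesgue (A \<times> B) = measure lebesgue A * measure lebesgue B"
proof -
  have AB: "A \<times> B \<in> sets (lborel::('a\<times>'b) measure)"
    using A B by (metis lborel_prod pair_measureI)
  have "emeasure (lborel::('a\<times>'b) measure) (A \<times> B) = emeasure lborel A * emeasure lborel B"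
    by (metis A B lborel_prod lborel.emeasure_pair_measure_Times)
  then have "measure (lborel::('a\<times>'b) measure) (A \<times> B) = measure lborel A * measure lborel B"
    unfolding measure_def by (simp add: enn2real_mult)
  then show ?thesis using A B AB by simp
qed

lemma fubini_avg:
  fixes f :: "'a::euclidean_space \<times> 'b::euclidean_space \<Rightarrow> 'c::euclidean_space"
  assumes fm: "f \<in> borel_measurable lebesgue"
    and fi: "integrable lebesgue (\<lambda>z. indicator (A \<times> B) z *\<^sub>R f z)"
    and A: "A \<in> sets lborel" and B: "B \<in> sets lborel"
    and fA: "emeasure lborel A < \<infinity>" and fB: "emeasure lborel B < \<infinity>"
  defines "g \<equiv> \<lambda>y1. if (\<lambda>y2. f (y1, y2)) \<in> borel_measurable lebesgue
                    then avg B (\<lambda>y2. f (y1, y2)) else 0"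
  shows "g \<in> borel_measurable lebesgue \<and> avg A g = avg (A \<times> B) f"
proof -
  obtain f' where f'm: "f' \<in> borel_measurable lborel" and ae: "AE z in lborel. f z = f' z"
    using ex_borel_version[OF fm] by blast
  have AB: "A \<times> B \<in> sets (lborel::('a\<times>'b) measure)"
    using A B by (metis lborel_prod pair_measureI)
  define \<phi> where "\<phi> z = indicator (A \<times> B) z *\<^sub>R f' z" for z
  have \<phi>m: "\<phi> \<in> borel_measurable lborel"
    unfolding \<phi>_def using f'm AB by measurable
  have aeL: "AE z in lebesgue. indicator (A \<times> B) z *\<^sub>R f z = \<phi> z"
    unfolding \<phi>_def by (rule AE_completion) (use ae in auto)
  have m1: "(\<lambda>z. indicator (A \<times> B) z *\<^sub>R f z) \<in> borel_measurable lebesgue"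
    using AB by (intro borel_measurable_scaleR borel_measurable_indicator fm) auto
  have m2: "\<phi> \<in> borel_measurable lebesgue" using \<phi>m by (rule measurable_completion)
  have "integrable lebesgue \<phi>" using integrable_cong_AE[OF m1 m2 aeL] fi by simp
  then have "integrable lborel \<phi>" using integrable_completion \<phi>m by blast
  then have \<phi>i: "integrable (lborel \<Otimes>\<^sub>M lborel) \<phi>" by (simp add: lborel_prod)
  have fub: "(\<integral>y1. (\<integral>y2. \<phi> (y1, y2) \<partial>lborel) \<partial>lborel) = integral\<^sup>L lebesgue (\<lambda>z. indicator (A \<times> B) z *\<^sub>R f z)"
  proof -
    have "(\<integral>y1. (\<integral>y2. \<phi> (y1, y2) \<partial>lborel) \<partial>lborel) = integral\<^sup>L (lborel \<Otimes>\<^sub>M lborel) \<phi>"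
      by (rule lborel_pair.integral_fst'[OF \<phi>i])
    also have "\<dots> = integral\<^sup>L lborel \<phi>" by (simp add: lborel_prod)
    also have "\<dots> = integral\<^sup>L lebesgue \<phi>" using integral_completion \<phi>m by metis
    also have "\<dots> = integral\<^sup>L lebesgue (\<lambda>z. indicator (A \<times> B) z *\<^sub>R f z)"
      using aeL by (intro integral_cong_AE m1 m2) (auto simp: eq_commute)
    finally show ?thesis .
  qed
  define m1 where "m1 = measure lebesgue A"
  define m2 where "m2 = measure lebesgue B"
  define h where "h y1 = (\<integral>y2. indicator B y2 *\<^sub>R f' (y1, y2) \<partial>lborel)" for y1
  have f'm2: "f' \<in> borel_measurable (lborel \<Otimes>\<^sub>M lborel)" using f'm by (simp add: lborel_prod)
  have hm: "h \<in> borel_measurable lborel"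
    unfolding h_def using f'm2 B by measurable
  have \<phi>sec: "(\<integral>y2. \<phi> (y1, y2) \<partial>lborel) = indicator A y1 *\<^sub>R h y1" for y1
    unfolding \<phi>_def h_def by (simp add: indicator_times flip: integral_scaleR_right)
  have aeP: "AE y1 in lborel. AE y2 in lborel. f (y1, y2) = f' (y1, y2)"
  proof (rule lborel_pair.AE_pair)
    show "AE z in lborel \<Otimes>\<^sub>M lborel. f z = f' z"
      unfolding lborel_prod by (rule ae)
  qed
  have geq: "AE y1 in lborel. g y1 = (1 / m2) *\<^sub>R h y1"
    using aeP
  proof (rule AE_mp, intro AE_I2 impI)
    fix y1 assume a: "AE y2 in lborel. f (y1, y2) = f' (y1, y2)"
    have s'm: "(\<lambda>y2. f' (y1, y2)) \<in> borel_measurable lborel" using f'm2 by measurable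
    then have s'mL: "(\<lambda>y2. f' (y1, y2)) \<in> borel_measurable lebesgue" by (rule measurable_completion)
    have aL: "AE y2 in lebesgue. f' (y1, y2) = f (y1, y2)"
      using a by (intro AE_completion) auto
    have smL: "(\<lambda>y2. f (y1, y2)) \<in> borel_measurable lebesgue"
      by (rule borel_measurable_AE[OF s'mL aL])
    have i1: "(\<lambda>y2. indicator B y2 *\<^sub>R f (y1, y2)) \<in> borel_measurable lebesgue"
      using B by (intro borel_measurable_scaleR borel_measurable_indicator smL) auto
    have i2: "(\<lambda>y2. indicator B y2 *\<^sub>R f' (y1, y2)) \<in> borel_measurable lborel"
      using B by (intro borel_measurable_scaleR borel_measurable_indicator s'm) auto
    have "g y1 = (1 / m2) *\<^sub>R (\<integral>y2. indicator B y2 *\<^sub>R f (y1, y2) \<partial>lebesgue)"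
      unfolding g_def avg_def m2_def set_lebesgue_integral_def using smL by simp
    also have "(\<integral>y2. indicator B y2 *\<^sub>R f (y1, y2) \<partial>lebesgue)
        = (\<integral>y2. indicator B y2 *\<^sub>R f' (y1, y2) \<partial>lebesgue)"
      using aL i1 measurable_completion[OF i2] by (intro integral_cong_AE) auto
    also have "\<dots> = h y1" unfolding h_def using integral_completion[OF i2] .
    finally show "g y1 = (1 / m2) *\<^sub>R h y1" .
  qed
  have hmL: "(\<lambda>y1. (1 / m2) *\<^sub>R h y1) \<in> borel_measurable lebesgue"
    using hm by (intro measurable_completion borel_measurable_scaleR borel_measurable_const)
  have geqL: "AE y1 in lebesgue. (1 / m2) *\<^sub>R h y1 = g y1"
    using geq by (intro AE_completion) auto
  have gm: "g \<in> borel_measurable lebesgue" by (rule borel_measurable_AE[OF hmL geqL])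
  have j1: "(\<lambda>y1. indicator A y1 *\<^sub>R g y1) \<in> borel_measurable lebesgue"
    using A by (intro borel_measurable_scaleR borel_measurable_indicator gm) auto
  have j2: "(\<lambda>y1. indicator A y1 *\<^sub>R h y1) \<in> borel_measurable lborel"
    using A by (intro borel_measurable_scaleR borel_measurable_indicator hm) auto
  have "(\<integral>y1. indicator A y1 *\<^sub>R g y1 \<partial>lebesgue)
      = (\<integral>y1. (1 / m2) *\<^sub>R (indicator A y1 *\<^sub>R h y1) \<partial>lebesgue)"
  proof (rule integral_cong_AE[OF j1])
    show "(\<lambda>y1. (1 / m2) *\<^sub>R (indicator A y1 *\<^sub>R h y1)) \<in> borel_measurable lebesgue"
      using measurable_completion[OF j2] by (rule borel_measurable_scaleR[OF borel_measurable_const])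
    show "AE y1 in lebesgue. indicator A y1 *\<^sub>R g y1 = (1 / m2) *\<^sub>R (indicator A y1 *\<^sub>R h y1)"
      using geqL
    proof (rule AE_mp, intro AE_I2 impI)
      fix y1 assume "(1 / m2) *\<^sub>R h y1 = g y1"
      then show "indicator A y1 *\<^sub>R g y1 = (1 / m2) *\<^sub>R (indicator A y1 *\<^sub>R h y1)"
        by (metis scaleR_left_commute)
    qed
  qed
  also have "\<dots> = (1 / m2) *\<^sub>R (\<integral>y1. indicator A y1 *\<^sub>R h y1 \<partial>lebesgue)"
    by (rule integral_scaleR_right)
  also have "(\<integral>y1. indicator A y1 *\<^sub>R h y1 \<partial>lebesgue) = (\<integral>y1. indicator A y1 *\<^sub>R h y1 \<partial>lborel)"
    using integral_completion[OF j2] .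
  also have "\<dots> = integral\<^sup>L lebesgue (\<lambda>z. indicator (A \<times> B) z *\<^sub>R f z)"
    using fub by (simp add: \<phi>sec)
  finally have I: "(\<integral>y1. indicator A y1 *\<^sub>R g y1 \<partial>lebesgue)
      = (1 / m2) *\<^sub>R integral\<^sup>L lebesgue (\<lambda>z. indicator (A \<times> B) z *\<^sub>R f z)" .
  have M: "measure lebesgue (A \<times> B) = m1 * m2"
    unfolding m1_def m2_def by (rule measure_times_lborel[OF A B fA fB])
  have "avg A g = avg (A \<times> B) f"
    unfolding avg_def set_lebesgue_integral_def I M m1_def[symmetric] by simp
  then show ?thesis using gm by simp
qed

lemma kbcs_zero: "kbcs A \<Longrightarrow> a \<in> A \<Longrightarrow> 0 \<in> A"
proof -
  assume k: "kbcs A" and a: "a \<in> A"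
  have "-a \<in> A" using k a unfolding kbcs_def by (metis imageI)
  moreover have "convex A" using k unfolding kbcs_def by simp
  ultimately have "(1/2::real) *\<^sub>R a + (1/2::real) *\<^sub>R (-a) \<in> A"
    using a by (intro convexD) auto
  then show ?thesis by simp
qed

lemma gen_in_maxK:
  "Q \<in> \<Q> \<Longrightarrow> f \<in> S0 F \<Longrightarrow> indicator Q x *\<^sub>R avg Q f \<in> maxK \<Q> F x"
  unfolding maxK_def
  by (rule subsetD[OF closure_subset], rule hull_inc) blast

lemma maxK_sub:
  assumes "\<And>Q f. Q \<in> \<Q> \<Longrightarrow> f \<in> S0 F \<Longrightarrow> indicator Q x *\<^sub>R avg Q f \<in> C"
    and "closed C" "convex C"
  shows "maxK \<Q> F x \<subseteq> C"
  unfolding maxK_def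
  using assms by (intro closure_minimal hull_minimal) auto

lemma unit_cube: "cbox 0 (0 + 1 *\<^sub>R One) \<in> cubes"
proof -
  have "(0::real) < 1" by simp
  then show ?thesis unfolding cubes_def by blast
qed

lemma zero_in_maxK_cubes:
  assumes "\<And>y. 0 \<in> G y"
  shows "0 \<in> maxK cubes G x"
proof -
  have "(\<lambda>_. 0) \<in> S0 G" unfolding S0_def using assms by auto
  from gen_in_maxK[OF unit_cube this, of x] show ?thesis by (simp add: avg_def)
qed

lemma cube_props:
  assumes "Q \<in> cubes"
  shows "Q \<in> sets lborel" "emeasure lborel Q < \<infinity>" "compact Q"
  using assms emeasure_lborel_cbox_finite unfolding cubes_def by auto

theorem lemma3p1:
  fixes F :: "'a::euclidean_space \<times> 'b::euclidean_space \<Rightarrow> 'c::euclidean_space set"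
  assumes "\<And>x. kbcs (F x)"
    and "loc_int_bounded F"
    and "loc_int_bounded (MK2 F)"
  shows "\<forall>x. MKs F x \<subseteq> MK1 (MK2 F) x"
proof
  fix x :: "'a \<times> 'b"
  obtain x1 x2 where x: "x = (x1, x2)" by (cases x)
  obtain k where kint: "loc_integrable k" and kb: "\<And>z a. a \<in> F z \<Longrightarrow> norm a \<le> k z"
    using assms(2) unfolding loc_int_bounded_def by blast
  define C where "C = maxK cubes (\<lambda>y1. MK2 F (y1, x2)) x1"
  have C: "MK1 (MK2 F) x = C" unfolding C_def x MK1_def MK_def by simp
  have Ccc: "closed C" "convex C" unfolding C_def maxK_def
    by (rule closed_closure, rule convex_closure, rule convex_convex_hull)
  show "MKs F x \<subseteq> MK1 (MK2 F) x"
    unfolding C MKs_def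
  proof (rule maxK_sub[OF _ Ccc])
    fix R :: "('a \<times> 'b) set" and f assume R: "R \<in> rects" and f: "f \<in> S0 F"
    have fm: "f \<in> borel_measurable lebesgue" and fF: "\<And>z. f z \<in> F z"
      using f unfolding S0_def by auto
    have F0: "0 \<in> F z" for z using kbcs_zero[OF assms(1) fF] .
    have MK20: "0 \<in> MK2 F (z1, z2)" for z1 z2
      unfolding MK2_def MK_def prod.case by (rule zero_in_maxK_cubes) (rule F0)
    have C0: "0 \<in> C" unfolding C_def by (rule zero_in_maxK_cubes) (rule MK20)
    obtain Q1 Q2 where R12: "R = Q1 \<times> Q2" and Q1: "Q1 \<in> cubes" and Q2: "Q2 \<in> cubes"
      using R unfolding rects_def by blast
    show "indicator R x *\<^sub>R avg R f \<in> C"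
    proof (cases "x \<in> R")
      case False
      then show ?thesis using C0 by simp
    next
      case True
      then have x1Q: "x1 \<in> Q1" and x2Q: "x2 \<in> Q2" using R12 x by auto
      have Rsets: "R \<in> sets lebesgue" using R12 cube_props[OF Q1] cube_props[OF Q2]
      proof -
        have "Q1 \<times> Q2 \<in> sets (lborel \<Otimes>\<^sub>M lborel)"
          using cube_props(1)[OF Q1] cube_props(1)[OF Q2] by (rule pair_measureI)
        then have "Q1 \<times> Q2 \<in> sets (lborel :: ('a \<times> 'b) measure)" by (simp only: lborel_prod)
        then show ?thesis unfolding R12 by (rule sets_completionI_sets)
      qed
      have "compact R" using R12 cube_props[OF Q1] cube_props[OF Q2] by (simp add: compact_Times)
      then have ki: "integrable lebesgue (\<lambda>z. indicator R z *\<^sub>R k z)"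
        using kint unfolding loc_integrable_def set_integrable_def by blast
      have fi: "integrable lebesgue (\<lambda>z. indicator R z *\<^sub>R f z)"
      proof (rule Bochner_Integration.integrable_bound[OF ki])
        show "(\<lambda>z. indicator R z *\<^sub>R f z) \<in> borel_measurable lebesgue"
          using Rsets by (intro borel_measurable_scaleR borel_measurable_indicator fm) auto
        show "AE z in lebesgue. norm (indicator R z *\<^sub>R f z) \<le> norm (indicator R z *\<^sub>R k z)"
        proof (intro AE_I2)
          fix z
          have "norm (f z) \<le> norm (k z)" using kb[OF fF[of z]] by simp
          then show "norm (indicator R z *\<^sub>R f z) \<le> norm (indicator R z *\<^sub>R k z)"
            by (cases "z \<in> R") simp_all
        qed
      qed
      define g where "g \<equiv> \<lambda>y1. if (\<lambda>y2. f (y1, y2)) \<in> borel_measurable lebesgue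
                    then avg Q2 (\<lambda>y2. f (y1, y2)) else 0"
      have gfub: "g \<in> borel_measurable lebesgue \<and> avg Q1 g = avg (Q1 \<times> Q2) f"
        unfolding g_def
        by (rule fubini_avg[OF fm fi[unfolded R12] cube_props(1)[OF Q1] cube_props(1)[OF Q2] cube_props(2)[OF Q1] cube_props(2)[OF Q2]])
      have gS: "g \<in> S0 (\<lambda>y1. MK2 F (y1, x2))"
        unfolding S0_def
      proof (intro CollectI conjI allI)
        show "g \<in> borel_measurable lebesgue" using gfub by simp
        fix y1
        show "g y1 \<in> MK2 F (y1, x2)"
        proof (cases "(\<lambda>y2. f (y1, y2)) \<in> borel_measurable lebesgue")
          case True
          then have "(\<lambda>y2. f (y1, y2)) \<in> S0 (\<lambda>y2. F (y1, y2))"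
            unfolding S0_def using fF by auto
          from gen_in_maxK[OF Q2 this, of x2] show ?thesis
            using True x2Q unfolding g_def MK2_def MK_def by simp
        next
          case False
          then show ?thesis using MK20 unfolding g_def by simp
        qed
      qed
      from gen_in_maxK[OF Q1 gS, of x1] have "avg Q1 g \<in> C"
        unfolding C_def using x1Q by simp
      then show ?thesis using True gfub R12 by simp
    qed
  qed
qed

end
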